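(* $m_4(5)\geq 6$. Specifically, let $X_0,X_1,X_2$ be pairwise disjoint copies of $\{0,1,2,3,4\}$, let $\mathcal P_j$ be the copy in $X_j$ of the pentagon $\mathcal P=\{\{i,i+1\}: i\in\mathbb Z_5\}$ and $\mathcal R_j$ the copy in $X_j$ of $\mathcal R=\{\{i,i+1,i+3\}: i\in\mathbb Z_5\}$ (indices mod 5). Let \[ \mathcal H=(\mathcal P_0\times\mathcal R_1)\cup(\mathcal P_1\times\mathcal R_2)\cup(\mathcal P_2\times\mathcal R_0), \] where $\mathcal P_a\times\mathcal R_b=\{P\cup R: P\in\mathcal P_a, R\in\mathcal R_b\}$. Then $\mathcal H$ is a $5$-uniform intersecting family with $|\mathcal H|=75$ and $|\{H\in\mathcal H: H\cap Y=\emptyset\}|\ge 6$ for every $4$-set $Y\subset X_0\cup X_1\cup X_2$; moreover $\tau(\mathcal H)=5$.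
   Context: A family is intersecting if any two members intersect; $\tau$ is the minimum size of a set meeting all members. $m_j(k)$ is the maximum of $\gamma_j(\mathcal F)=\min_{|S|=j}|\{F\in\mathcal F:F\cap S=\emptyset\}|$ over all intersecting $k$-uniform families $\mathcal F$ (on any finite ground set) with $\tau(\mathcal F)=k$. *)

theory Defs
  imports Main "HOL-Library.Extended_Nat"
begin

text \<open>Families are sets of sets; ground elements are natural numbers
(any finite ground set embeds into the naturals).\<close>

definition intersecting :: "'a set set \<Rightarrow> bool" where
  "intersecting F \<longleftrightarrow> (\<forall>A\<in>F. \<forall>B\<in>F. A \<inter> B \<noteq> {})"

definition uniform :: "nat \<Rightarrow> 'a set set \<Rightarrow> bool" where
  "uniform k F \<longleftrightarrow> (\<forall>A\<in>F. finite A \<and> card A = k)"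

definition tau :: "'a set set \<Rightarrow> nat" where
  "tau F = (LEAST t. \<exists>S. finite S \<and> card S = t \<and> (\<forall>A\<in>F. A \<inter> S \<noteq> {}))"

definition avoid :: "'a set set \<Rightarrow> 'a set \<Rightarrow> nat" where
  "avoid F S = card {A\<in>F. A \<inter> S = {}}"

definition gamma :: "nat \<Rightarrow> 'a set set \<Rightarrow> nat" where
  "gamma j F = Inf {avoid F S | S. finite S \<and> card S = j}"

definition m :: "nat \<Rightarrow> nat \<Rightarrow> enat" where
  "m j k = (SUP F \<in> {F :: nat set set. finite F \<and> uniform k F \<and> intersecting F \<and> tau F = k}.
              enat (gamma j F))"

text \<open>X_j is encoded as {5j,...,5j+4}; copy of i in X_j is 5j+i.\<close>
definition copy :: "nat \<Rightarrow> nat set \<Rightarrow> nat set" where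
  "copy j A = (\<lambda>i. 5 * j + i) ` A"

definition X :: "nat \<Rightarrow> nat set" where
  "X j = copy j {0..<5}"

definition Pent :: "nat set set" where
  "Pent = {{i, (i + 1) mod 5} | i. i < 5}"

definition Rfam :: "nat set set" where
  "Rfam = {{i, (i + 1) mod 5, (i + 3) mod 5} | i. i < 5}"

definition Pc :: "nat \<Rightarrow> nat set set" where
  "Pc j = copy j ` Pent"

definition Rc :: "nat \<Rightarrow> nat set set" where
  "Rc j = copy j ` Rfam"

definition prodfam :: "'a set set \<Rightarrow> 'a set set \<Rightarrow> 'a set set" where
  "prodfam A B = {P \<union> R | P R. P \<in> A \<and> R \<in> B}"

definition Hfam :: "nat set set" where
  "Hfam = prodfam (Pc 0) (Rc 1) \<union> prodfam (Pc 1) (Rc 2) \<union> prodfam (Pc 2) (Rc 0)"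

end

theory Submission imports Defs begin

definition e :: "nat \<Rightarrow> nat set" where "e i = {i, (i+1) mod 5}"
definition t :: "nat \<Rightarrow> nat set" where "t i = {i, (i+1) mod 5, (i+3) mod 5}"
definition Bs :: "nat \<Rightarrow> nat set \<Rightarrow> nat set" where "Bs j Y = {i. i < 5 \<and> 5*j+i \<in> Y}"
definition pcnt :: "nat set \<Rightarrow> nat" where
  "pcnt B = card {i. i < 5 \<and> i \<notin> B \<and> (i+1) mod 5 \<notin> B}"
definition rcnt :: "nat set \<Rightarrow> nat" where
  "rcnt B = card {i. i < 5 \<and> i \<notin> B \<and> (i+1) mod 5 \<notin> B \<and> (i+3) mod 5 \<notin> B}"
definition V :: "(nat \<times> nat \<times> nat) set" where
  "V = {(0,5,5),(1,3,2),(2,2,0),(2,1,1),(3,1,0),(3,0,0),(4,0,0),(5,0,0)}"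

lemma card_lt_sum: "card {i. i < (n::nat) \<and> Q i} = (\<Sum>i<n. if Q i then 1 else (0::nat))"
proof (induction n)
  case 0 then show ?case by simp
next
  case (Suc n)
  have "{i. i < Suc n \<and> Q i} = (if Q n then insert n {i. i < n \<and> Q i} else {i. i < n \<and> Q i})"
    by (auto simp: less_Suc_eq)
  then show ?case using Suc by simp
qed

lemma card5: "card {i. i < (5::nat) \<and> Q i} = (if Q 0 then 1 else 0) + (if Q 1 then 1 else 0)
   + (if Q 2 then 1 else 0) + (if Q 3 then 1 else 0) + (if Q 4 then 1 else 0)"
  by (simp add: card_lt_sum lessThan_nat_numeral)

lemma pc5: "pcnt B = (if 0 \<notin> B \<and> 1 \<notin> B then 1 else 0) + (if 1 \<notin> B \<and> 2 \<notin> B then 1 else 0)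
  + (if 2 \<notin> B \<and> 3 \<notin> B then 1 else 0) + (if 3 \<notin> B \<and> 4 \<notin> B then 1 else 0) + (if 4 \<notin> B \<and> 0 \<notin> B then 1 else 0)"
  unfolding pcnt_def card5 by (simp add: numeral_2_eq_2)
lemma rc5: "rcnt B = (if 0 \<notin> B \<and> 1 \<notin> B \<and> 3 \<notin> B then 1 else 0) + (if 1 \<notin> B \<and> 2 \<notin> B \<and> 4 \<notin> B then 1 else 0)
  + (if 2 \<notin> B \<and> 3 \<notin> B \<and> 0 \<notin> B then 1 else 0) + (if 3 \<notin> B \<and> 4 \<notin> B \<and> 1 \<notin> B then 1 else 0) + (if 4 \<notin> B \<and> 0 \<notin> B \<and> 2 \<notin> B then 1 else 0)"
  unfolding rcnt_def card5 by (simp add: numeral_2_eq_2)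

lemma tab: assumes "B \<subseteq> {..<5}" shows "(card B, pcnt B, rcnt B) \<in> V"
proof -
  have "B = {i. i < 5 \<and> i \<in> B}" using assms by auto
  then have cB: "card B = card {i. i < 5 \<and> i \<in> B}" by simp
  show ?thesis unfolding cB pc5 rc5 card5
    by (cases "0\<in>B"; cases "1\<in>B"; cases "2\<in>B"; cases "3\<in>B"; cases "4\<in>B"; simp only: V_def if_True if_False simp_thms; simp)
qed

lemma final: "\<forall>a\<in>V. \<forall>b\<in>V. \<forall>c\<in>V. fst a + fst b + fst c \<le> 4 \<longrightarrow>
   6 \<le> fst (snd a) * snd (snd b) + fst (snd b) * snd (snd c) + fst (snd c) * snd (snd a)"
  by (simp add: V_def)


lemma lt5: "(i::nat) < 5 \<longleftrightarrow> i = 0 \<or> i = 1 \<or> i = 2 \<or> i = 3 \<or> i = 4" by auto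

lemma Pent_img: "Pent = e ` {..<5}" unfolding Pent_def e_def by auto
lemma Rfam_img: "Rfam = t ` {..<5}" unfolding Rfam_def t_def by auto

lemma inj_e: "inj_on e {..<5}"
proof (rule inj_onI)
  fix i j assume ij: "i \<in> {..<5}" "j \<in> {..<5}" and eq: "e i = e j"
  have "i \<in> e j" "(i+1) mod 5 \<in> e j" "j \<in> e i" using eq unfolding e_def by blast+
  then show "i = j" using ij unfolding lessThan_iff lt5 by (elim disjE) (simp_all add: e_def)
qed

lemma inj_t: "inj_on t {..<5}"
proof (rule inj_onI)
  fix i j assume ij: "i \<in> {..<5}" "j \<in> {..<5}" and eq: "t i = t j"
  have "i \<in> t j" "(i+1) mod 5 \<in> t j" "(i+3) mod 5 \<in> t j" using eq unfolding t_def by blast+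
  then show "i = j" using ij unfolding lessThan_iff lt5 by (elim disjE) (simp_all add: t_def)
qed

lemma inj_copy: "inj (\<lambda>i::nat. 5*j + i)" by (auto intro: injI)
lemma copy_inj_eq: "copy j A = copy j B \<longleftrightarrow> A = B"
  unfolding copy_def by (simp add: inj_image_eq_iff inj_copy)
lemma copy_Int: "copy j A \<inter> copy j B = copy j (A \<inter> B)"
  unfolding copy_def by (simp add: image_Int inj_copy)
lemma copy_empty: "copy j A = {} \<longleftrightarrow> A = {}" unfolding copy_def by simp
lemma card_copy: "card (copy j A) = card A"
  unfolding copy_def by (simp add: card_image inj_on_def)
lemma finite_copy: "finite (copy j A) = finite A"
  unfolding copy_def by (simp add: finite_image_iff inj_on_def)
lemma copy_sub_X: "A \<subseteq> {..<5} \<Longrightarrow> copy j A \<subseteq> X j"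
  unfolding X_def copy_def by auto
lemma X_disj: assumes "a \<noteq> b" shows "X a \<inter> X b = {}"
proof -
  { fix x assume "x \<in> X a" "x \<in> X b"
    then have "5*a \<le> x \<and> x < 5*a+5 \<and> 5*b \<le> x \<and> x < 5*b+5" unfolding X_def copy_def by auto
    then have False using assms by presburger }
  then show ?thesis by blast
qed

lemma e_sub: "i < 5 \<Longrightarrow> e i \<subseteq> {..<5}" unfolding e_def by auto
lemma t_sub: "i < 5 \<Longrightarrow> t i \<subseteq> {..<5}" unfolding t_def by auto
lemma e_ne: "e i \<noteq> {}" unfolding e_def by auto
lemma t_ne: "t i \<noteq> {}" unfolding t_def by auto

lemma Pc_img: "Pc j = (\<lambda>i. copy j (e i)) ` {..<5}" unfolding Pc_def Pent_img by (simp add: image_image)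
lemma Rc_img: "Rc j = (\<lambda>i. copy j (t i)) ` {..<5}" unfolding Rc_def Rfam_img by (simp add: image_image)

lemma filt_img: "{x \<in> f ` A. Q x} = f ` {i\<in>A. Q (f i)}" by auto

lemma inj_ce: "inj_on (\<lambda>i. copy j (e i)) {..<5}"
  using inj_e by (auto simp: inj_on_def copy_inj_eq)
lemma inj_ct: "inj_on (\<lambda>i. copy j (t i)) {..<5}"
  using inj_t by (auto simp: inj_on_def copy_inj_eq)

lemma Pc_avoid: "card {P \<in> Pc j. P \<inter> Y = {}} = pcnt (Bs j Y)"
proof -
  have "{i \<in> {..<5}. copy j (e i) \<inter> Y = {}} = {i. i < 5 \<and> i \<notin> Bs j Y \<and> (i+1) mod 5 \<notin> Bs j Y}"
    by (auto simp: copy_def e_def Bs_def)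
  then show ?thesis unfolding Pc_img filt_img pcnt_def
    by (metis (no_types, lifting) card_image inj_ce inj_on_subset mem_Collect_eq subsetI)
qed

lemma Rc_avoid: "card {P \<in> Rc j. P \<inter> Y = {}} = rcnt (Bs j Y)"
proof -
  have "{i \<in> {..<5}. copy j (t i) \<inter> Y = {}} = {i. i < 5 \<and> i \<notin> Bs j Y \<and> (i+1) mod 5 \<notin> Bs j Y \<and> (i+3) mod 5 \<notin> Bs j Y}"
    by (auto simp: copy_def t_def Bs_def)
  then show ?thesis unfolding Rc_img filt_img rcnt_def
    by (metis (no_types, lifting) card_image inj_ct inj_on_subset mem_Collect_eq subsetI)
qed

lemma Pc_sub: "P \<in> Pc j \<Longrightarrow> P \<subseteq> X j" unfolding Pc_img using copy_sub_X e_sub by auto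
lemma Rc_sub: "P \<in> Rc j \<Longrightarrow> P \<subseteq> X j" unfolding Rc_img using copy_sub_X t_sub by auto
lemma Pc_ne: "P \<in> Pc j \<Longrightarrow> P \<noteq> {}" unfolding Pc_img using copy_empty e_ne by auto
lemma Rc_ne: "P \<in> Rc j \<Longrightarrow> P \<noteq> {}" unfolding Rc_img using copy_empty t_ne by auto
lemma finite_Pc: "finite (Pc j)" unfolding Pc_img by simp
lemma finite_Rc: "finite (Rc j)" unfolding Rc_img by simp

lemma card_prodfam:
  assumes "finite A" "finite C" "\<forall>P\<in>A. P \<subseteq> U" "\<forall>R\<in>C. R \<subseteq> W" "U \<inter> W = {}"
  shows "card (prodfam A C) = card A * card C"
proof -
  have eq: "prodfam A C = (\<lambda>(P,R). P \<union> R) ` (A \<times> C)" by (auto simp: prodfam_def)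
  have "inj_on (\<lambda>(P,R). P \<union> R) (A \<times> C)"
  proof (rule inj_onI, clarify)
    fix P R P' R' assume h: "P\<in>A" "R\<in>C" "P'\<in>A" "R'\<in>C" "P \<union> R = P' \<union> R'"
    have sP: "P \<subseteq> U" "P' \<subseteq> U" "R \<subseteq> W" "R' \<subseteq> W" using h assms(3,4) by auto
    show "P = P' \<and> R = R'"
    proof
      show "P = P'" using sP h(5) assms(5) by blast
      show "R = R'" using sP h(5) assms(5) by blast
    qed
  qed
  then show ?thesis unfolding eq by (simp add: card_image card_cartesian_product)
qed

lemma finite_prodfam: "finite A \<Longrightarrow> finite C \<Longrightarrow> finite (prodfam A C)"
proof -
  assume "finite A" "finite C"
  moreover have "prodfam A C = (\<lambda>(P,R). P \<union> R) ` (A \<times> C)" by (auto simp: prodfam_def)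
  ultimately show ?thesis by simp
qed

lemma prodfam_filter: "{H \<in> prodfam A C. H \<inter> Y = {}} = prodfam {P\<in>A. P \<inter> Y = {}} {R\<in>C. R \<inter> Y = {}}"
  by (auto simp: prodfam_def)

lemma fab_card: assumes "a \<noteq> b"
  shows "card {H \<in> prodfam (Pc a) (Rc b). H \<inter> Y = {}} = pcnt (Bs a Y) * rcnt (Bs b Y)"
  unfolding prodfam_filter Pc_avoid[symmetric] Rc_avoid[symmetric]
  by (rule card_prodfam[where U = "X a" and W = "X b"])
     (use finite_Pc finite_Rc Pc_sub Rc_sub X_disj[OF assms] in auto)

lemma mem_fab: "H \<in> prodfam (Pc a) (Rc b) \<Longrightarrow> H \<subseteq> X a \<union> X b \<and> H \<inter> X a \<noteq> {} \<and> H \<inter> X b \<noteq> {}"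
proof -
  assume "H \<in> prodfam (Pc a) (Rc b)"
  then obtain P R where h: "H = P \<union> R" "P \<in> Pc a" "R \<in> Rc b" unfolding prodfam_def by blast
  have "P \<subseteq> X a" "R \<subseteq> X b" "P \<noteq> {}" "R \<noteq> {}" using h Pc_sub Rc_sub Pc_ne Rc_ne by auto
  then show ?thesis unfolding h(1) by blast
qed

abbreviation "F01 \<equiv> prodfam (Pc 0) (Rc 1)"
abbreviation "F12 \<equiv> prodfam (Pc 1) (Rc 2)"
abbreviation "F20 \<equiv> prodfam (Pc 2) (Rc 0)"

lemma finF: "finite (prodfam (Pc a) (Rc b))" by (simp add: finite_prodfam finite_Pc finite_Rc)

lemma avoid_formula: "avoid Hfam Y = pcnt (Bs 0 Y) * rcnt (Bs 1 Y) + pcnt (Bs 1 Y) * rcnt (Bs 2 Y)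
   + pcnt (Bs 2 Y) * rcnt (Bs 0 Y)"
proof -
  let ?A = "{H \<in> F01. H \<inter> Y = {}}" and ?B = "{H \<in> F12. H \<inter> Y = {}}" and ?C = "{H \<in> F20. H \<inter> Y = {}}"
  have eq: "{A \<in> Hfam. A \<inter> Y = {}} = ?A \<union> ?B \<union> ?C" unfolding Hfam_def by auto
  have d01: "X 0 \<inter> X 1 = {}" "X 0 \<inter> X 2 = {}" "X 1 \<inter> X 2 = {}" by (simp_all add: X_disj)
  have "?A \<inter> ?B = {}" using mem_fab[of _ 0 1] mem_fab[of _ 1 2] d01 by blast
  moreover have "(?A \<union> ?B) \<inter> ?C = {}" using mem_fab[of _ 0 1] mem_fab[of _ 1 2] mem_fab[of _ 2 0] d01 by blast
  moreover have "finite ?A" "finite ?B" "finite ?C" using finF by auto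
  ultimately have "card (?A \<union> ?B \<union> ?C) = card ?A + card ?B + card ?C"
    by (simp add: card_Un_disjoint)
  then show ?thesis unfolding avoid_def eq using fab_card by simp
qed

lemma avoid_ge: assumes "finite Y" "card Y \<le> 4" shows "avoid Hfam Y \<ge> 6"
proof -
  have sub: "Bs j Y \<subseteq> {..<5}" for j unfolding Bs_def by auto
  have cs: "copy j (Bs j Y) \<subseteq> Y" for j unfolding copy_def Bs_def by auto
  have d01: "X 0 \<inter> X 1 = {}" "X 0 \<inter> X 2 = {}" "X 1 \<inter> X 2 = {}" by (simp_all add: X_disj)
  have fin: "finite (Bs j Y)" for j using sub finite_subset by blast
  let ?C0 = "copy 0 (Bs 0 Y)" and ?C1 = "copy 1 (Bs 1 Y)" and ?C2 = "copy 2 (Bs 2 Y)"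
  have x: "?C0 \<subseteq> X 0" "?C1 \<subseteq> X 1" "?C2 \<subseteq> X 2" using copy_sub_X[OF sub] by auto
  have f: "finite ?C0" "finite ?C1" "finite ?C2" using fin by (simp_all add: finite_copy)
  have i1: "?C0 \<inter> ?C1 = {}" using x d01 by blast
  have i2: "(?C0 \<union> ?C1) \<inter> ?C2 = {}" using x d01 by blast
  have eqc: "card (?C0 \<union> ?C1 \<union> ?C2) = card (Bs 0 Y) + card (Bs 1 Y) + card (Bs 2 Y)"
    using f i1 i2 by (simp add: card_Un_disjoint card_copy)
  have "?C0 \<union> ?C1 \<union> ?C2 \<subseteq> Y" using cs by auto
  then have "card (?C0 \<union> ?C1 \<union> ?C2) \<le> card Y" using card_mono[OF assms(1)] by blast
  then have "card (Bs 0 Y) + card (Bs 1 Y) + card (Bs 2 Y) \<le> 4" using assms(2) eqc by linarith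
  moreover note final tab[OF sub, of 0] tab[OF sub, of 1] tab[OF sub, of 2]
  ultimately show ?thesis unfolding avoid_formula
    by (metis (no_types, lifting) fst_conv snd_conv)
qed


lemma card_e: "i < 5 \<Longrightarrow> card (e i) = 2"
  unfolding lt5 by (elim disjE) (simp_all add: e_def)
lemma card_t: "i < 5 \<Longrightarrow> card (t i) = 3"
  unfolding lt5 by (elim disjE) (simp_all add: t_def)
lemma et: "i < 5 \<Longrightarrow> k < 5 \<Longrightarrow> e i \<inter> t k \<noteq> {}"
  unfolding lt5 by (elim disjE) (simp_all add: e_def t_def)
lemma tt: "i < 5 \<Longrightarrow> k < 5 \<Longrightarrow> t i \<inter> t k \<noteq> {}"
  unfolding lt5 by (elim disjE) (simp_all add: t_def)

lemma mem_fab2: "H \<in> prodfam (Pc a) (Rc b) \<Longrightarrow> \<exists>i<5. \<exists>k<5. H = copy a (e i) \<union> copy b (t k)"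
  unfolding prodfam_def Pc_img Rc_img by auto

lemma fab_uniform: assumes "a \<noteq> b" "H \<in> prodfam (Pc a) (Rc b)" shows "finite H \<and> card H = 5"
proof -
  obtain i k where ik: "i < 5" "k < 5" "H = copy a (e i) \<union> copy b (t k)" using mem_fab2[OF assms(2)] by blast
  have "copy a (e i) \<subseteq> X a" "copy b (t k) \<subseteq> X b" using copy_sub_X e_sub t_sub ik by auto
  then have d: "copy a (e i) \<inter> copy b (t k) = {}" using X_disj[OF assms(1)] by blast
  have f: "finite (copy a (e i))" "finite (copy b (t k))" by (simp_all add: finite_copy e_def t_def)
  show ?thesis unfolding ik(3) using f d card_Un_disjoint[OF f d] card_copy card_e[OF ik(1)] card_t[OF ik(2)]
    by simp
qed

lemma fab_inter: assumes "H \<in> prodfam (Pc a) (Rc b)" "H' \<in> prodfam (Pc a') (Rc b')"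
  "b = b' \<or> b = a' \<or> b' = a" shows "H \<inter> H' \<noteq> {}"
proof -
  obtain i k where ik: "i < 5" "k < 5" "H = copy a (e i) \<union> copy b (t k)" using mem_fab2[OF assms(1)] by blast
  obtain i' k' where ik': "i' < 5" "k' < 5" "H' = copy a' (e i') \<union> copy b' (t k')" using mem_fab2[OF assms(2)] by blast
  from assms(3) show ?thesis
  proof (elim disjE)
    assume "b = b'"
    then have "copy b (t k) \<inter> copy b' (t k') \<noteq> {}" using tt[OF ik(2) ik'(2)] by (simp add: copy_Int copy_empty)
    then show ?thesis using ik ik' by blast
  next
    assume "b = a'"
    then have "copy b (t k) \<inter> copy a' (e i') \<noteq> {}" using et[OF ik'(1) ik(2)] by (simp add: copy_Int copy_empty Int_commute)
    then show ?thesis using ik ik' by blast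
  next
    assume "b' = a"
    then have "copy a (e i) \<inter> copy b' (t k') \<noteq> {}" using et[OF ik(1) ik'(2)] by (simp add: copy_Int copy_empty)
    then show ?thesis using ik ik' by blast
  qed
qed

lemma H_uniform: "uniform 5 Hfam"
  unfolding uniform_def Hfam_def using fab_uniform[of 0 1] fab_uniform[of 1 2] fab_uniform[of 2 0] by auto

lemma H_inter: "intersecting Hfam"
  unfolding intersecting_def Hfam_def
  using fab_inter[of _ 0 1 _ 0 1] fab_inter[of _ 0 1 _ 1 2] fab_inter[of _ 0 1 _ 2 0]
        fab_inter[of _ 1 2 _ 0 1] fab_inter[of _ 1 2 _ 1 2] fab_inter[of _ 1 2 _ 2 0]
        fab_inter[of _ 2 0 _ 0 1] fab_inter[of _ 2 0 _ 1 2] fab_inter[of _ 2 0 _ 2 0]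
  by auto

lemma H_card: "card Hfam = 75"
proof -
  have "avoid Hfam {} = card Hfam" unfolding avoid_def by simp
  moreover have "Bs j {} = {}" for j unfolding Bs_def by simp
  ultimately show ?thesis using avoid_formula[of "{}"] by (simp add: pc5 rc5)
qed

lemma H_finite: "finite Hfam" unfolding Hfam_def using finF by simp

lemma cov1: "k < 5 \<Longrightarrow> copy 1 (t k) \<inter> {0,1,5,6,8} \<noteq> {}"
  unfolding lt5 by (elim disjE) (simp_all add: t_def copy_def)
lemma cov2: "k < 5 \<Longrightarrow> copy 1 (e k) \<inter> {0,1,5,6,8} \<noteq> {}"
  unfolding lt5 by (elim disjE) (simp_all add: e_def copy_def)
lemma cov3: "k < 5 \<Longrightarrow> copy 0 (t k) \<inter> {0,1,5,6,8} \<noteq> {}"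
  unfolding lt5 by (elim disjE) (simp_all add: t_def copy_def)

lemma H_tau: "tau Hfam = 5"
  unfolding tau_def
proof (rule Least_equality)
  have "\<forall>A\<in>Hfam. A \<inter> {0,1,5,6,8} \<noteq> {}"
  proof
    fix A assume "A \<in> Hfam"
    then consider "A \<in> F01" | "A \<in> F12" | "A \<in> F20" unfolding Hfam_def by blast
    then show "A \<inter> {0,1,5,6,8} \<noteq> {}"
    proof cases
      case 1 then obtain i k where "k < 5" "A = copy 0 (e i) \<union> copy 1 (t k)" using mem_fab2 by blast
      then show ?thesis using cov1 by blast
    next
      case 2 then obtain i k where "i < 5" "A = copy 1 (e i) \<union> copy 2 (t k)" using mem_fab2 by blast
      then show ?thesis using cov2 by blast
    next
      case 3 then obtain i k where "k < 5" "A = copy 2 (e i) \<union> copy 0 (t k)" using mem_fab2 by blast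
      then show ?thesis using cov3 by blast
    qed
  qed
  then show "\<exists>S. finite S \<and> card S = 5 \<and> (\<forall>A\<in>Hfam. A \<inter> S \<noteq> {})"
    by (intro exI[of _ "{0,1,5,6,8}"]) simp
next
  fix y assume "\<exists>S. finite S \<and> card S = y \<and> (\<forall>A\<in>Hfam. A \<inter> S \<noteq> {})"
  then obtain S where S: "finite S" "card S = y" "\<forall>A\<in>Hfam. A \<inter> S \<noteq> {}" by blast
  show "5 \<le> y"
  proof (rule ccontr)
    assume "\<not> 5 \<le> y"
    then have "avoid Hfam S \<ge> 6" using avoid_ge S by simp
    then have "{A \<in> Hfam. A \<inter> S = {}} \<noteq> {}" unfolding avoid_def by (metis card.empty not_numeral_le_zero)
    then show False using S(3) by blast
  qed
qed

lemma H_gamma: "gamma 4 Hfam \<ge> 6"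
  unfolding gamma_def
proof (rule cInf_greatest)
  have "finite {0,1,2,3::nat} \<and> card {0,1,2,3::nat} = 4" by simp
  then show "{avoid Hfam S |S. finite S \<and> card S = 4} \<noteq> {}" by blast
  fix x assume "x \<in> {avoid Hfam S |S. finite S \<and> card S = 4}"
  then obtain S where "x = avoid Hfam S" "finite S" "card S = 4" by blast
  then show "6 \<le> x" using avoid_ge by simp
qed

theorem proposition5p9:
  shows "uniform 5 Hfam \<and> intersecting Hfam \<and> card Hfam = 75
    \<and> (\<forall>Y. Y \<subseteq> X 0 \<union> X 1 \<union> X 2 \<and> card Y = 4 \<longrightarrow> avoid Hfam Y \<ge> 6)
    \<and> tau Hfam = 5
    \<and> m 4 5 \<ge> 6"
proof (intro conjI allI impI)
  show "uniform 5 Hfam" by (rule H_uniform)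
  show "intersecting Hfam" by (rule H_inter)
  show "card Hfam = 75" by (rule H_card)
  show "tau Hfam = 5" by (rule H_tau)
  fix Y assume "Y \<subseteq> X 0 \<union> X 1 \<union> X 2 \<and> card Y = 4"
  then have "finite Y" "card Y = 4" by (auto intro: card_ge_0_finite)
  then show "avoid Hfam Y \<ge> 6" using avoid_ge by simp
next
  have "Hfam \<in> {F :: nat set set. finite F \<and> uniform 5 F \<and> intersecting F \<and> tau F = 5}"
    using H_finite H_uniform H_inter H_tau by simp
  then have "enat (gamma 4 Hfam) \<le> m 4 5" unfolding m_def by (rule SUP_upper)
  moreover have "(6::enat) \<le> enat (gamma 4 Hfam)" using H_gamma by (simp add: numeral_eq_enat)
  ultimately show "6 \<le> m 4 5" by (rule order_trans[rotated])
qed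

end
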